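(* Let $l\in\mathbb{N}$, let $\mathcal{A},\mathcal{B}_1,\mathcal{B}_2,\mathcal{C}$ be finite sets, and let $p_{AB_1B_2C}=p_Ap_{B_1|A}p_{B_2|A}p_{C|B_1B_2}$ be a pmf on $\mathcal{A}\times\mathcal{B}_1\times\mathcal{B}_2\times\mathcal{C}$ such that $p_A$ is a type of sequences in $\mathcal{A}^l$. Let $u^l:[M_u]\to\mathcal{A}^l$ be a map such that $u^l(m)$ has type $p_A$ for every $m$, and let $(M_1,M_2)\in[M_u]\times[M_u]$ be random variables with an arbitrary joint pmf. Suppose $(A_1^l,A_2^l,B_1^l,B_2^l,C^l)$ has pmf $$p(a_1^l,a_2^l,b_1^l,b_2^l,c^l)=\Big[\sum_{m_1,m_2}P(M_1=m_1,M_2=m_2)\mathbf{1}\{u^l(m_1)=a_1^l,u^l(m_2)=a_2^l\}\Big]\prod_{i=1}^lp_{B_1|A}(b_{1i}|a_{1i})p_{B_2|A}(b_{2i}|a_{2i})p_{C|B_1B_2}(c_i|b_{1i},b_{2i}),$$ and let $I\in\{1,\dots,l\}$ be uniformly distributed and independent of $(A_1^l,A_2^l,B_1^l,B_2^l,C^l)$. Then for all $x,y_1,y_2,z$, $$P(A_{1I}=x,A_{2I}=x,B_{1I}=y_1,B_{2I}=y_2,C_I=z\mid A_1^l=A_2^l)=p_{AB_1B_2C}(x,y_1,y_2,z),$$ provided $P(A_1^l=A_2^l)>0$.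
   Context: A pmf $p_A$ on $\mathcal{A}$ is a type of sequences in $\mathcal{A}^l$ if $lp_A(a)$ is an integer for all $a$; a sequence $a^l$ has type $p_A$ if $\frac1l|\{i:a_i=a\}|=p_A(a)$ for all $a$. $A_{1I}$ denotes the $I$-th component of $A_1^l$, etc. *)

theory Defs
  imports Main "HOL-Library.FuncSet" Complex_Main
begin

text \<open>Sequences in A^l are lists of length l; positions are 0-based internally,
  so the paper's component i (1 \<le> i \<le> l) is list index i - 1.\<close>

definition seqs :: "nat \<Rightarrow> 'a list set" where
  "seqs l = {xs. length xs = l}"

definition is_type :: "nat \<Rightarrow> ('a \<Rightarrow> real) \<Rightarrow> bool" where
  "is_type l p \<longleftrightarrow> (\<forall>a. real l * p a \<in> \<int>)"

definition has_type :: "nat \<Rightarrow> ('a \<Rightarrow> real) \<Rightarrow> 'a list \<Rightarrow> bool" where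
  "has_type l p xs \<longleftrightarrow> length xs = l \<and>
     (\<forall>a. real (card {i. i < l \<and> xs ! i = a}) / real l = p a)"

definition seq_pmf ::
  "nat \<Rightarrow> nat \<Rightarrow> (nat \<Rightarrow> nat \<Rightarrow> real) \<Rightarrow> (nat \<Rightarrow> 'a list)
   \<Rightarrow> ('a \<Rightarrow> 'b1 \<Rightarrow> real) \<Rightarrow> ('a \<Rightarrow> 'b2 \<Rightarrow> real) \<Rightarrow> ('b1 \<Rightarrow> 'b2 \<Rightarrow> 'c \<Rightarrow> real)
   \<Rightarrow> 'a list \<Rightarrow> 'a list \<Rightarrow> 'b1 list \<Rightarrow> 'b2 list \<Rightarrow> 'c list \<Rightarrow> real" where
  "seq_pmf l Mu PM u pB1 pB2 pC a1 a2 b1 b2 c =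
     (\<Sum>m1\<in>{1..Mu}. \<Sum>m2\<in>{1..Mu}.
        PM m1 m2 * (if u m1 = a1 \<and> u m2 = a2 then 1 else 0)) *
     (\<Prod>i<l. pB1 (a1 ! i) (b1 ! i) * pB2 (a2 ! i) (b2 ! i) * pC (b1 ! i) (b2 ! i) (c ! i))"

definition prob_eq ::
  "nat \<Rightarrow> ('a list \<Rightarrow> 'a list \<Rightarrow> 'b1 list \<Rightarrow> 'b2 list \<Rightarrow> 'c list \<Rightarrow> real) \<Rightarrow> real" where
  "prob_eq l p =
     (\<Sum>a1\<in>seqs l. \<Sum>a2\<in>seqs l. \<Sum>b1\<in>seqs l. \<Sum>b2\<in>seqs l. \<Sum>c\<in>seqs l.
        (if a1 = a2 then p a1 a2 b1 b2 c else 0))"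

definition prob_joint_eq ::
  "nat \<Rightarrow> ('a list \<Rightarrow> 'a list \<Rightarrow> 'b1 list \<Rightarrow> 'b2 list \<Rightarrow> 'c list \<Rightarrow> real)
   \<Rightarrow> 'a \<Rightarrow> 'b1 \<Rightarrow> 'b2 \<Rightarrow> 'c \<Rightarrow> real" where
  "prob_joint_eq l p x y1 y2 z =
     (\<Sum>a1\<in>seqs l. \<Sum>a2\<in>seqs l. \<Sum>b1\<in>seqs l. \<Sum>b2\<in>seqs l. \<Sum>c\<in>seqs l. \<Sum>I\<in>{1..l}.
        (1 / real l) * p a1 a2 b1 b2 c *
        (if a1 ! (I - 1) = x \<and> a2 ! (I - 1) = x \<and> b1 ! (I - 1) = y1 \<and>
            b2 ! (I - 1) = y2 \<and> c ! (I - 1) = z \<and> a1 = a2 then 1 else 0))"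

end

theory Submission imports Defs begin

lemma finite_seqs: "finite (seqs l :: ('a::finite) list set)"
proof -
  have "seqs l = {xs::'a list. set xs \<subseteq> UNIV \<and> length xs = l}" by (auto simp: seqs_def)
  then show ?thesis using finite_lists_length_eq[of "UNIV::'a set" l] by simp
qed

lemma seqs_Suc: "seqs (Suc l) = (\<lambda>(x,xs). x#xs) ` (UNIV \<times> seqs l)"
  by (auto simp: seqs_def length_Suc_conv image_iff)

lemma sum_seqs_prod:
  fixes f :: "nat \<Rightarrow> 'b::finite \<Rightarrow> real"
  shows "(\<Sum>xs\<in>seqs l. \<Prod>i<l. f i (xs!i)) = (\<Prod>i<l. \<Sum>b\<in>UNIV. f i b)"
proof (induction l arbitrary: f)
  case 0
  have s0: "seqs 0 = {[]}" by (auto simp: seqs_def)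
  then show ?case unfolding s0 by simp
next
  case (Suc l)
  have inj: "inj_on (\<lambda>(x,xs). x#xs) (UNIV \<times> seqs l)" by (auto simp: inj_on_def)
  have "(\<Sum>xs\<in>seqs (Suc l). \<Prod>i<Suc l. f i (xs!i))
      = (\<Sum>p\<in>UNIV \<times> seqs l. \<Prod>i<Suc l. f i ((fst p # snd p)!i))"
    unfolding seqs_Suc by (subst sum.reindex[OF inj]) (simp add: case_prod_beta)
  also have "\<dots> = (\<Sum>x\<in>UNIV. \<Sum>xs\<in>seqs l. f 0 x * (\<Prod>i<l. f (Suc i) (xs!i)))"
    by (simp only: sum.cartesian_product prod.lessThan_Suc_shift) (simp add: case_prod_beta)
  also have "\<dots> = (\<Sum>x\<in>UNIV. f 0 x * (\<Prod>i<l. \<Sum>b\<in>UNIV. f (Suc i) b))"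
    by (simp add: sum_distrib_left[symmetric] Suc.IH[of "\<lambda>i. f (Suc i)"])
  also have "\<dots> = (\<Prod>i<Suc l. \<Sum>b\<in>UNIV. f i b)"
    by (simp only: prod.lessThan_Suc_shift sum_distrib_right)
  finally show ?case .
qed

lemma sum3:
  fixes F :: "nat \<Rightarrow> 'b1::finite \<Rightarrow> 'b2::finite \<Rightarrow> 'c::finite \<Rightarrow> real"
  shows "(\<Sum>b1\<in>seqs l. \<Sum>b2\<in>seqs l. \<Sum>c\<in>seqs l. \<Prod>i<l. F i (b1!i) (b2!i) (c!i))
     = (\<Prod>i<l. \<Sum>u\<in>UNIV. \<Sum>v\<in>UNIV. \<Sum>w\<in>UNIV. F i u v w)"
proof -
  have "(\<Sum>b1\<in>seqs l. \<Sum>b2\<in>seqs l. \<Sum>c\<in>seqs l. \<Prod>i<l. F i (b1!i) (b2!i) (c!i))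
     = (\<Sum>b1\<in>seqs l. \<Sum>b2\<in>seqs l. \<Prod>i<l. \<Sum>w\<in>UNIV. F i (b1!i) (b2!i) w)"
    by (intro sum.cong refl) (rule sum_seqs_prod)
  also have "\<dots> = (\<Sum>b1\<in>seqs l. \<Prod>i<l. \<Sum>v\<in>UNIV. \<Sum>w\<in>UNIV. F i (b1!i) v w)"
    apply (intro sum.cong refl)
    subgoal for b1 by (rule sum_seqs_prod[of "\<lambda>i v. \<Sum>w\<in>UNIV. F i (b1!i) v w"])
    done
  also have "\<dots> = (\<Prod>i<l. \<Sum>u\<in>UNIV. \<Sum>v\<in>UNIV. \<Sum>w\<in>UNIV. F i u v w)"
    by (rule sum_seqs_prod[of "\<lambda>i u. \<Sum>v\<in>UNIV. \<Sum>w\<in>UNIV. F i u v w"])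
  finally show ?thesis .
qed


lemma Q1:
  fixes pA :: "'a::finite \<Rightarrow> real" and pB1 :: "'a \<Rightarrow> 'b1::finite \<Rightarrow> real"
    and pB2 :: "'a \<Rightarrow> 'b2::finite \<Rightarrow> real" and pC :: "'b1 \<Rightarrow> 'b2 \<Rightarrow> 'c::finite \<Rightarrow> real"
  assumes pA_nonneg: "\<forall>a. pA a \<ge> 0"
    and pB1_nonneg: "\<forall>a b. pB1 a b \<ge> 0"
    and pB1_sum: "\<forall>a. pA a > 0 \<longrightarrow> (\<Sum>b\<in>UNIV. pB1 a b) = 1"
    and pB2_nonneg: "\<forall>a b. pB2 a b \<ge> 0"
    and pB2_sum: "\<forall>a. pA a > 0 \<longrightarrow> (\<Sum>b\<in>UNIV. pB2 a b) = 1"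
    and pC_sum: "\<forall>b1 b2. (\<Sum>a\<in>UNIV. pA a * pB1 a b1 * pB2 a b2) > 0
                   \<longrightarrow> (\<Sum>c\<in>UNIV. pC b1 b2 c) = 1"
    and v: "pA v > 0"
  shows "(\<Sum>u\<in>UNIV. \<Sum>w\<in>UNIV. \<Sum>c\<in>UNIV. pB1 v u * pB2 v w * pC u w c) = 1"
proof -
  have step: "(\<Sum>c\<in>UNIV. pB1 v u * pB2 v w * pC u w c) = pB1 v u * pB2 v w" for u w
  proof (cases "pB1 v u * pB2 v w = 0")
    case True then show ?thesis by auto
  next
    case False
    then have gt: "pB1 v u * pB2 v w > 0" using pB1_nonneg pB2_nonneg
      by (metis less_eq_real_def mult_nonneg_nonneg)
    have "pA v * pB1 v u * pB2 v w \<le> (\<Sum>a\<in>UNIV. pA a * pB1 a u * pB2 a w)"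
      by (rule member_le_sum) (use pA_nonneg pB1_nonneg pB2_nonneg in auto)
    moreover have "pA v * pB1 v u * pB2 v w > 0" using gt v by (simp add: mult.assoc)
    ultimately have "(\<Sum>c\<in>UNIV. pC u w c) = 1" using pC_sum by force
    then show ?thesis by (simp add: sum_distrib_left[symmetric])
  qed
  have "(\<Sum>u\<in>UNIV. \<Sum>w\<in>UNIV. \<Sum>c\<in>UNIV. pB1 v u * pB2 v w * pC u w c)
      = (\<Sum>u\<in>UNIV. \<Sum>w\<in>UNIV. pB1 v u * pB2 v w)" by (simp add: step)
  also have "\<dots> = (\<Sum>u\<in>UNIV. pB1 v u) * (\<Sum>w\<in>UNIV. pB2 v w)"
    by (simp add: sum_product)
  also have "\<dots> = 1" using pB1_sum pB2_sum v by simp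
  finally show ?thesis .
qed

lemma Qall:
  fixes a :: "'a list" and pB1 :: "'a \<Rightarrow> 'b1::finite \<Rightarrow> real"
    and pB2 :: "'a \<Rightarrow> 'b2::finite \<Rightarrow> real" and pC :: "'b1 \<Rightarrow> 'b2 \<Rightarrow> 'c::finite \<Rightarrow> real"
  assumes Q: "\<forall>i<l. (\<Sum>u\<in>UNIV. \<Sum>w\<in>UNIV. \<Sum>c\<in>UNIV. pB1 (a!i) u * pB2 (a!i) w * pC u w c) = 1"
  shows "(\<Sum>b1\<in>seqs l. \<Sum>b2\<in>seqs l. \<Sum>c\<in>seqs l.
      \<Prod>i<l. pB1 (a!i) (b1!i) * pB2 (a!i) (b2!i) * pC (b1!i) (b2!i) (c!i)) = 1"
  by (subst sum3[of "\<lambda>i u w c. pB1 (a!i) u * pB2 (a!i) w * pC u w c"]) (simp add: Q)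

lemma Qj:
  fixes a :: "'a list" and pB1 :: "'a \<Rightarrow> 'b1::finite \<Rightarrow> real"
    and pB2 :: "'a \<Rightarrow> 'b2::finite \<Rightarrow> real" and pC :: "'b1 \<Rightarrow> 'b2 \<Rightarrow> 'c::finite \<Rightarrow> real"
  assumes Q: "\<forall>i<l. (\<Sum>u\<in>UNIV. \<Sum>w\<in>UNIV. \<Sum>c\<in>UNIV. pB1 (a!i) u * pB2 (a!i) w * pC u w c) = 1"
    and j: "j < l"
  shows "(\<Sum>b1\<in>seqs l. \<Sum>b2\<in>seqs l. \<Sum>c\<in>seqs l.
      (\<Prod>i<l. pB1 (a!i) (b1!i) * pB2 (a!i) (b2!i) * pC (b1!i) (b2!i) (c!i)) *
      (if b1!j = y1 \<and> b2!j = y2 \<and> c!j = z then 1 else 0))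
    = pB1 (a!j) y1 * pB2 (a!j) y2 * pC y1 y2 z"
proof -
  define G where "G i u w c = pB1 (a!i) u * pB2 (a!i) w * pC u w c *
      (if i = j then (if u = y1 \<and> w = y2 \<and> c = z then 1 else 0) else (1::real))" for i u w c
  have pw: "(\<Prod>i<l. pB1 (a!i) (b1!i) * pB2 (a!i) (b2!i) * pC (b1!i) (b2!i) (c!i)) *
      (if b1!j = y1 \<and> b2!j = y2 \<and> c!j = z then 1 else 0)
      = (\<Prod>i<l. G i (b1!i) (b2!i) (c!i))" for b1 b2 c
  proof -
    have "(\<Prod>i<l. G i (b1!i) (b2!i) (c!i)) =
      (\<Prod>i<l. pB1 (a!i) (b1!i) * pB2 (a!i) (b2!i) * pC (b1!i) (b2!i) (c!i)) *
      (\<Prod>i<l. if i = j then (if b1!i = y1 \<and> b2!i = y2 \<and> c!i = z then 1 else 0) else (1::real))"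
      unfolding G_def by (rule prod.distrib)
    also have "(\<Prod>i<l. if i = j then (if b1!i = y1 \<and> b2!i = y2 \<and> c!i = z then 1 else 0) else (1::real))
       = (if b1!j = y1 \<and> b2!j = y2 \<and> c!j = z then 1 else 0)"
      using j by (subst prod.delta) auto
    finally show ?thesis by simp
  qed
  have "(\<Sum>b1\<in>seqs l. \<Sum>b2\<in>seqs l. \<Sum>c\<in>seqs l.
      (\<Prod>i<l. pB1 (a!i) (b1!i) * pB2 (a!i) (b2!i) * pC (b1!i) (b2!i) (c!i)) *
      (if b1!j = y1 \<and> b2!j = y2 \<and> c!j = z then 1 else 0))
     = (\<Prod>i<l. \<Sum>u\<in>UNIV. \<Sum>v\<in>UNIV. \<Sum>w\<in>UNIV. G i u v w)"
    unfolding pw by (rule sum3)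
  also have "\<dots> = (\<Sum>u\<in>UNIV. \<Sum>v\<in>UNIV. \<Sum>w\<in>UNIV. G j u v w) *
      (\<Prod>i\<in>{..<l}-{j}. \<Sum>u\<in>UNIV. \<Sum>v\<in>UNIV. \<Sum>w\<in>UNIV. G i u v w)"
    using j by (subst prod.remove[of _ j]) auto
  also have "(\<Prod>i\<in>{..<l}-{j}. \<Sum>u\<in>UNIV. \<Sum>v\<in>UNIV. \<Sum>w\<in>UNIV. G i u v w) = 1"
    by (rule prod.neutral) (auto simp: G_def Q)
  also have "(\<Sum>u\<in>UNIV. \<Sum>v\<in>UNIV. \<Sum>w\<in>UNIV. G j u v w) = pB1 (a!j) y1 * pB2 (a!j) y2 * pC y1 y2 z"
  proof -
    have "G j u v w = (if w = z then (if v = y2 then (if u = y1 then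
       pB1 (a!j) y1 * pB2 (a!j) y2 * pC y1 y2 z else 0) else 0) else 0)" for u v w
      unfolding G_def by auto
    then show ?thesis by simp
  qed
  finally show ?thesis by simp
qed


theorem lemma7:
  fixes l Mu :: nat
    and pA :: "'a::finite \<Rightarrow> real"
    and pB1 :: "'a \<Rightarrow> 'b1::finite \<Rightarrow> real"
    and pB2 :: "'a \<Rightarrow> 'b2::finite \<Rightarrow> real"
    and pC :: "'b1 \<Rightarrow> 'b2 \<Rightarrow> 'c::finite \<Rightarrow> real"
    and u :: "nat \<Rightarrow> 'a list"
    and PM :: "nat \<Rightarrow> nat \<Rightarrow> real"
    and x :: 'a and y1 :: 'b1 and y2 :: 'b2 and z :: 'c
  assumes l_pos: "l \<ge> 1"
    and pA_nonneg: "\<forall>a. pA a \<ge> 0" and pA_sum: "(\<Sum>a\<in>UNIV. pA a) = 1"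
    and pB1_nonneg: "\<forall>a b. pB1 a b \<ge> 0"
    and pB1_sum: "\<forall>a. pA a > 0 \<longrightarrow> (\<Sum>b\<in>UNIV. pB1 a b) = 1"
    and pB2_nonneg: "\<forall>a b. pB2 a b \<ge> 0"
    and pB2_sum: "\<forall>a. pA a > 0 \<longrightarrow> (\<Sum>b\<in>UNIV. pB2 a b) = 1"
    and pC_nonneg: "\<forall>b1 b2 c. pC b1 b2 c \<ge> 0"
    and pC_sum: "\<forall>b1 b2. (\<Sum>a\<in>UNIV. pA a * pB1 a b1 * pB2 a b2) > 0
                   \<longrightarrow> (\<Sum>c\<in>UNIV. pC b1 b2 c) = 1"
    and pA_type: "is_type l pA"
    and u_type: "\<forall>m\<in>{1..Mu}. has_type l pA (u m)"
    and PM_nonneg: "\<forall>m1\<in>{1..Mu}. \<forall>m2\<in>{1..Mu}. PM m1 m2 \<ge> 0"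
    and PM_sum: "(\<Sum>m1\<in>{1..Mu}. \<Sum>m2\<in>{1..Mu}. PM m1 m2) = 1"
    and pos: "prob_eq l (seq_pmf l Mu PM u pB1 pB2 pC) > 0"
  shows "prob_joint_eq l (seq_pmf l Mu PM u pB1 pB2 pC) x y1 y2 z
           / prob_eq l (seq_pmf l Mu PM u pB1 pB2 pC)
         = pA x * pB1 x y1 * pB2 x y2 * pC y1 y2 z"
proof -
  define S where "S a = (\<Sum>m1\<in>{1..Mu}. \<Sum>m2\<in>{1..Mu}.
        PM m1 m2 * (if u m1 = a \<and> u m2 = a then 1 else 0))" for a
  define P where "P a b1 b2 c = (\<Prod>i<l. pB1 (a ! i) (b1 ! i) * pB2 (a ! i) (b2 ! i) * pC (b1 ! i) (b2 ! i) (c ! i))"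
    for a :: "'a list" and b1 :: "'b1 list" and b2 :: "'b2 list" and c :: "'c list"
  define q where "q = pB1 x y1 * pB2 x y2 * pC y1 y2 z"
  have sp: "seq_pmf l Mu PM u pB1 pB2 pC a a b1 b2 c = S a * P a b1 b2 c" for a b1 b2 c
    unfolding seq_pmf_def S_def P_def by simp
  have good: "has_type l pA a" if "S a \<noteq> 0" for a
  proof (rule ccontr)
    assume "\<not> has_type l pA a"
    then have "\<forall>m\<in>{1..Mu}. u m \<noteq> a" using u_type by auto
    then have "S a = 0" unfolding S_def by simp
    with that show False by simp
  qed
  have Qa: "\<forall>i<l. (\<Sum>u\<in>UNIV. \<Sum>w\<in>UNIV. \<Sum>c\<in>UNIV. pB1 (a!i) u * pB2 (a!i) w * pC u w c) = 1"
    if "has_type l pA a" for a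
  proof (intro allI impI)
    fix i assume i: "i < l"
    have "pA (a!i) = real (card {j. j < l \<and> a ! j = a!i}) / real l"
      using that unfolding has_type_def by auto
    moreover have "card {j. j < l \<and> a ! j = a!i} > 0"
      using i by (subst card_gt_0_iff) auto
    ultimately have "pA (a!i) > 0" using l_pos by simp
    then show "(\<Sum>u\<in>UNIV. \<Sum>w\<in>UNIV. \<Sum>c\<in>UNIV. pB1 (a!i) u * pB2 (a!i) w * pC u w c) = 1"
      by (rule Q1[OF pA_nonneg pB1_nonneg pB1_sum pB2_nonneg pB2_sum pC_sum])
  qed
  have fin: "finite (seqs l :: 'a list set)" by (rule finite_seqs)
  have inner_eq: "(\<Sum>b1\<in>seqs l. \<Sum>b2\<in>seqs l. \<Sum>c\<in>seqs l.
        (if a1 = a2 then seq_pmf l Mu PM u pB1 pB2 pC a1 a2 b1 b2 c else 0))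
      = (if a1 = a2 then S a1 else 0)" for a1 a2
  proof (cases "a1 = a2")
    case True
    show ?thesis
    proof (cases "S a1 = 0")
      case True then show ?thesis using \<open>a1 = a2\<close> by (simp add: sp)
    next
      case False
      have "(\<Sum>b1\<in>seqs l. \<Sum>b2\<in>seqs l. \<Sum>c\<in>seqs l. S a1 * P a1 b1 b2 c)
          = S a1 * (\<Sum>b1\<in>seqs l. \<Sum>b2\<in>seqs l. \<Sum>c\<in>seqs l. P a1 b1 b2 c)"
        by (simp add: sum_distrib_left)
      also have "\<dots> = S a1" unfolding P_def using Qall[OF Qa[OF good[OF False]]] by simp
      finally show ?thesis using \<open>a1 = a2\<close> by (simp add: sp)
    qed
  qed simp
  have PE: "prob_eq l (seq_pmf l Mu PM u pB1 pB2 pC) = (\<Sum>a\<in>seqs l. S a)"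
    unfolding prob_eq_def inner_eq using fin by simp
  have inner_j: "(\<Sum>b1\<in>seqs l. \<Sum>b2\<in>seqs l. \<Sum>c\<in>seqs l. \<Sum>I\<in>{1..l}.
        (1 / real l) * seq_pmf l Mu PM u pB1 pB2 pC a1 a2 b1 b2 c *
        (if a1 ! (I - 1) = x \<and> a2 ! (I - 1) = x \<and> b1 ! (I - 1) = y1 \<and>
            b2 ! (I - 1) = y2 \<and> c ! (I - 1) = z \<and> a1 = a2 then 1 else 0))
      = (if a1 = a2 then S a1 * pA x * q else 0)" for a1 a2
  proof (cases "a1 = a2")
    case True
    show ?thesis
    proof (cases "S a1 = 0")
      case True then show ?thesis using \<open>a1 = a2\<close> by (simp add: sp)
    next
      case False
      define a where "a = a1"
      have ht: "has_type l pA a" using good[OF False] a_def by simp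
      note Q = Qa[OF ht]
      have "(\<Sum>b1\<in>seqs l. \<Sum>b2\<in>seqs l. \<Sum>c\<in>seqs l. \<Sum>I\<in>{1..l}.
        (1 / real l) * (S a * P a b1 b2 c) *
        (if a ! (I - 1) = x \<and> a ! (I - 1) = x \<and> b1 ! (I - 1) = y1 \<and>
            b2 ! (I - 1) = y2 \<and> c ! (I - 1) = z \<and> a = a then 1 else 0))
        = (\<Sum>I\<in>{1..l}. \<Sum>b1\<in>seqs l. \<Sum>b2\<in>seqs l. \<Sum>c\<in>seqs l.
        (1 / real l) * (S a * P a b1 b2 c) *
        (if a ! (I - 1) = x \<and> a ! (I - 1) = x \<and> b1 ! (I - 1) = y1 \<and>
            b2 ! (I - 1) = y2 \<and> c ! (I - 1) = z \<and> a = a then 1 else 0))"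
        by (simp only: sum.swap[where B="{1..l}"])
      also have "\<dots> = (\<Sum>I\<in>{1..l}. (1 / real l) * S a * (if a ! (I - 1) = x then q else 0))"
      proof (rule sum.cong[OF refl])
        fix I assume I: "I \<in> {1..l}"
        define j where "j = I - 1"
        have j: "j < l" using I j_def by auto
        have "(\<Sum>b1\<in>seqs l. \<Sum>b2\<in>seqs l. \<Sum>c\<in>seqs l.
          (1 / real l) * (S a * P a b1 b2 c) *
          (if a ! j = x \<and> a ! j = x \<and> b1 ! j = y1 \<and>
            b2 ! j = y2 \<and> c ! j = z \<and> a = a then 1 else 0))
          = (\<Sum>b1\<in>seqs l. \<Sum>b2\<in>seqs l. \<Sum>c\<in>seqs l.
          ((1 / real l) * S a * (if a ! j = x then 1 else 0)) *
          (P a b1 b2 c * (if b1 ! j = y1 \<and> b2 ! j = y2 \<and> c ! j = z then 1 else 0)))"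
          by (intro sum.cong refl) simp
        also have "\<dots> = ((1 / real l) * S a * (if a ! j = x then 1 else 0)) *
          (\<Sum>b1\<in>seqs l. \<Sum>b2\<in>seqs l. \<Sum>c\<in>seqs l.
          (P a b1 b2 c * (if b1 ! j = y1 \<and> b2 ! j = y2 \<and> c ! j = z then 1 else 0)))"
          by (simp add: sum_distrib_left)
        also have "\<dots> = ((1 / real l) * S a * (if a ! j = x then 1 else 0)) *
           (pB1 (a!j) y1 * pB2 (a!j) y2 * pC y1 y2 z)"
          unfolding P_def by (subst Qj[OF Q j]) (rule refl)
        also have "\<dots> = (1 / real l) * S a * (if a ! j = x then q else 0)"
          by (simp add: q_def)
        finally show "(\<Sum>b1\<in>seqs l. \<Sum>b2\<in>seqs l. \<Sum>c\<in>seqs l.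
          (1 / real l) * (S a * P a b1 b2 c) *
          (if a ! (I - 1) = x \<and> a ! (I - 1) = x \<and> b1 ! (I - 1) = y1 \<and>
            b2 ! (I - 1) = y2 \<and> c ! (I - 1) = z \<and> a = a then 1 else 0))
          = (1 / real l) * S a * (if a ! (I - 1) = x then q else 0)"
          unfolding j_def .
      qed
      also have "\<dots> = (\<Sum>j<l. (1 / real l) * S a * (if a ! j = x then q else 0))"
      proof -
        have "{1..l} = Suc ` {..<l}" by (simp add: lessThan_atLeast0 image_Suc_atLeastLessThan atLeastLessThanSuc_atLeastAtMost)
        then show ?thesis by (simp add: sum.reindex)
      qed
      also have "\<dots> = (1 / real l) * S a * (\<Sum>j<l. (if a ! j = x then q else 0))"
        by (simp only: sum_distrib_left)
      also have "(\<Sum>j<l. (if a ! j = x then q else 0)) = (\<Sum>j\<in>{j\<in>{..<l}. a ! j = x}. q)"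
        by (rule sum.inter_filter[symmetric]) simp
      also have "\<dots> = real (card {j. j < l \<and> a ! j = x}) * q"
        by simp
      also have "(1 / real l) * S a * (real (card {j. j < l \<and> a ! j = x}) * q)
          = S a * (real (card {j. j < l \<and> a ! j = x}) / real l) * q"
        by simp
      also have "\<dots> = S a * pA x * q" using ht unfolding has_type_def by simp
      finally show ?thesis using \<open>a1 = a2\<close> a_def by (simp add: sp)
    qed
  qed simp
  have PJ: "prob_joint_eq l (seq_pmf l Mu PM u pB1 pB2 pC) x y1 y2 z = pA x * q * (\<Sum>a\<in>seqs l. S a)"
    unfolding prob_joint_eq_def inner_j using fin by (simp add: sum_distrib_left mult.commute mult.left_commute)
  show ?thesis using pos unfolding PJ PE q_def by (simp add: PE)
qed

end
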